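(* Let $\rho\in(0,1)$, $\xi\in\mathbb{R}$, and $H=\frac{1}{2(1-\rho\cos x)}\big(\sin^2x\,(P_x^2+P_y^2)+\xi\big)$ on $(x,y)\in(0,\pi)\times\mathbb{R}$. On a level set $H=E\neq0$, $P_y=L>0$, set $\sigma=\frac1\rho\big(\frac{\xi}{2E}-1\big)$ and $\eta=\frac{\rho E}{L^2}$. If $\eta>0$ and $-1<\sigma<1$, the projection to the $(x,y)$-plane of a trajectory of the Hamiltonian flow on this level set, normalized by a translation in $y$ so that $y=0$ at $x=x_*$, has equation $$\cosh y=\frac{\eta-\cos x}{\sqrt{\eta^2+2\sigma\eta+1}},\qquad x\in(x_*,\pi),$$ where $\cos x_*=\eta-\sqrt{\eta^2+2\sigma\eta+1}$. *)

theory Defs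
  imports "HOL-Analysis.Analysis"
begin

definition Ham :: "real \<Rightarrow> real \<Rightarrow> real \<Rightarrow> real \<Rightarrow> real \<Rightarrow> real \<Rightarrow> real" where
  "Ham \<rho> \<xi> x y px py = (sin x ^ 2 * (px ^ 2 + py ^ 2) + \<xi>) / (2 * (1 - \<rho> * cos x))"

definition hamiltonian_trajectory ::
  "real \<Rightarrow> real \<Rightarrow> real set \<Rightarrow> (real \<Rightarrow> real) \<Rightarrow> (real \<Rightarrow> real) \<Rightarrow> (real \<Rightarrow> real) \<Rightarrow> (real \<Rightarrow> real) \<Rightarrow> bool"
  where
  "hamiltonian_trajectory \<rho> \<xi> I x y px py \<longleftrightarrow>
     (\<forall>t\<in>I.
        (x has_real_derivative deriv (\<lambda>q. Ham \<rho> \<xi> (x t) (y t) q (py t)) (px t)) (at t) \<and>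
        (y has_real_derivative deriv (\<lambda>q. Ham \<rho> \<xi> (x t) (y t) (px t) q) (py t)) (at t) \<and>
        (px has_real_derivative - deriv (\<lambda>q. Ham \<rho> \<xi> q (y t) (px t) (py t)) (x t)) (at t) \<and>
        (py has_real_derivative - deriv (\<lambda>q. Ham \<rho> \<xi> (x t) q (px t) (py t)) (y t)) (at t))"

end

theory Submission imports Defs begin
lemma dq1: assumes "K \<noteq> (0::real)"
  shows "((\<lambda>q. (A * (q^2 + B) + C) / (2 * K)) has_real_derivative A * q0 / K) (at q0)"
  apply (rule derivative_eq_intros refl)+
  using assms by (auto simp add: field_simps)
lemma dq2: assumes "K \<noteq> (0::real)"
  shows "((\<lambda>q. (A * (B + q^2) + C) / (2 * K)) has_real_derivative A * q0 / K) (at q0)"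
  apply (rule derivative_eq_intros refl)+
  using assms by (auto simp add: field_simps)

lemma dpx: assumes "\<rho> < 1" "0 < \<rho>"
  shows "deriv (\<lambda>q. Ham \<rho> \<xi> x y q p) q0 = sin x ^ 2 * q0 / (1 - \<rho> * cos x)"
proof -
  have k: "1 - \<rho> * cos x > 0"
  proof -
    have "\<rho> * cos x \<le> \<rho> * 1" by (rule mult_left_mono) (use assms(2) in auto)
    thus ?thesis using assms(1) by simp
  qed
  have "((\<lambda>q. Ham \<rho> \<xi> x y q p) has_real_derivative sin x ^ 2 * q0 / (1 - \<rho> * cos x)) (at q0)"
    unfolding Ham_def using k by (intro dq1) simp
  thus ?thesis by (rule DERIV_imp_deriv)
qed
lemma dpy: assumes "\<rho> < 1" "0 < \<rho>"
  shows "deriv (\<lambda>q. Ham \<rho> \<xi> x y p q) q0 = sin x ^ 2 * q0 / (1 - \<rho> * cos x)"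
proof -
  have k: "1 - \<rho> * cos x > 0"
  proof -
    have "\<rho> * cos x \<le> \<rho> * 1" by (rule mult_left_mono) (use assms(2) in auto)
    thus ?thesis using assms(1) by simp
  qed
  have "((\<lambda>q. Ham \<rho> \<xi> x y p q) has_real_derivative sin x ^ 2 * q0 / (1 - \<rho> * cos x)) (at q0)"
    unfolding Ham_def using k by (intro dq2) simp
  thus ?thesis by (rule DERIV_imp_deriv)
qed
lemma eqk: fixes k sn c Q \<xi> \<rho> :: real assumes "k \<noteq> 0"
  shows "(2 * sn * c * Q * (2 * k) - (sn ^ 2 * Q + \<xi>) * (2 * \<rho> * sn)) / ((2 * k) * (2 * k))
     = sn * c * Q / k - (sn ^ 2 * Q + \<xi>) * \<rho> * sn / (2 * k ^ 2)"
  using assms by (simp add: field_simps power2_eq_square)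

lemma dx: assumes "\<rho> < 1" "0 < \<rho>"
  shows "deriv (\<lambda>q. Ham \<rho> \<xi> q y p r) x0 = sin x0 * cos x0 * (p^2+r^2) / (1 - \<rho> * cos x0)
     - (sin x0 ^ 2 * (p^2+r^2) + \<xi>) * \<rho> * sin x0 / (2 * (1 - \<rho> * cos x0)^2)"
proof -
  have k: "1 - \<rho> * cos x0 > 0"
  proof -
    have "\<rho> * cos x0 \<le> \<rho> * 1" by (rule mult_left_mono) (use assms(2) in auto)
    thus ?thesis using assms(1) by simp
  qed
  have dN: "((\<lambda>q. sin q ^ 2 * (p^2+r^2) + \<xi>) has_real_derivative 2 * sin x0 * cos x0 * (p^2+r^2)) (at x0)"
    by (rule derivative_eq_intros refl)+ simp
  have dK: "((\<lambda>q. 2 * (1 - \<rho> * cos q)) has_real_derivative 2 * \<rho> * sin x0) (at x0)"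
    by (rule derivative_eq_intros refl)+ simp
  have "((\<lambda>q. Ham \<rho> \<xi> q y p r) has_real_derivative
     (2 * sin x0 * cos x0 * (p^2+r^2) * (2 * (1 - \<rho> * cos x0)) - (sin x0 ^ 2 * (p^2+r^2) + \<xi>) * (2 * \<rho> * sin x0))
      / ((2 * (1 - \<rho> * cos x0)) * (2 * (1 - \<rho> * cos x0)))) (at x0)"
    unfolding Ham_def by (rule DERIV_divide[OF dN dK]) (use k in simp)
  hence "deriv (\<lambda>q. Ham \<rho> \<xi> q y p r) x0 = (2 * sin x0 * cos x0 * (p^2+r^2) * (2 * (1 - \<rho> * cos x0)) - (sin x0 ^ 2 * (p^2+r^2) + \<xi>) * (2 * \<rho> * sin x0))
      / ((2 * (1 - \<rho> * cos x0)) * (2 * (1 - \<rho> * cos x0)))" by (rule DERIV_imp_deriv)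
  also have "\<dots> = sin x0 * cos x0 * (p^2+r^2) / (1 - \<rho> * cos x0)
     - (sin x0 ^ 2 * (p^2+r^2) + \<xi>) * \<rho> * sin x0 / (2 * (1 - \<rho> * cos x0)^2)"
    by (rule eqk) (use k in simp)
  finally show ?thesis .
qed
lemma dy: "deriv (\<lambda>q. Ham \<rho> \<xi> x q p r) y0 = 0"
  unfolding Ham_def by simp
lemma alg0:
  fixes \<rho> c s P L E \<xi> \<eta> D k :: real
  assumes "k = 1 - \<rho>*c" "k > 0" "D > 0" "L > 0"
    and "(s^2*(P^2+L^2)+\<xi>)/(2*k) = E" "\<eta> * L^2 = \<rho> * E"
  shows "(s * (s^2 * P / k)) / D + (c * (s^2 * P / k) * P + s * (- (s * c*(P^2+L^2)/k - (s^2*(P^2+L^2)+\<xi>)*\<rho>* s/(2*k^2)))) / (D*L)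
     - ((\<eta> - c)/D + s*P/(D*L)) * (s^2*L/k) = 0"
proof -
  have k0: "k \<noteq> 0" "D \<noteq> 0" "L \<noteq> 0" using assms(2,3,4) by auto
  have N: "s^2*(P^2+L^2)+\<xi> = 2*E*k" using assms(5) k0 by (simp add: field_simps)
  have NR: "(s^2*(P^2+L^2)+\<xi>)*\<rho>* s/(2*k^2) = E*\<rho>* s/k" unfolding N using k0 by (simp add: field_simps power2_eq_square)
  have "(s * (s^2 * P / k)) / D + (c * (s^2 * P / k) * P + s * (- (s * c*(P^2+L^2)/k - E*\<rho>* s/k))) / (D*L)
     - ((\<eta> - c)/D + s*P/(D*L)) * (s^2*L/k) = s^2 * (\<rho>*E - \<eta>*L^2) / (D*L*k)"
    using k0 by (simp add: field_simps power2_eq_square)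
  thus ?thesis unfolding NR using assms(6) by simp
qed

lemma alg1:
  fixes \<rho> c s P L E \<xi> \<eta> D k \<sigma> :: real
  assumes "k = 1 - \<rho>*c" "k > 0" "D > 0" "L > 0" "E \<noteq> 0" "\<rho> > 0" "s^2 + c^2 = 1"
    and "(s^2*(P^2+L^2)+\<xi>)/(2*k) = E" "\<eta> = \<rho> * E / L^2"
    and "\<sigma> = (1 / \<rho>) * (\<xi> / (2 * E) - 1)" "D^2 = \<eta> ^ 2 + 2 * \<sigma> * \<eta> + 1"
  shows "((\<eta> - c)/D)^2 - (s*P/(D*L))^2 = 1"
proof -
  have k0: "k \<noteq> 0" "D \<noteq> 0" "L \<noteq> 0" using assms(2,3,4) by auto
  have N: "s^2*P^2 = 2*E*(1 - \<rho>*c) - \<xi> - s^2*L^2" using assms(8) k0 unfolding assms(1) by (simp add: field_simps)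
  have xi: "\<xi> = 2*E*(1+\<rho>*\<sigma>)" using assms(10,5,6) by (simp add: field_simps)
  have eL: "\<rho>*E = \<eta>*L^2" using assms(9) k0 by (simp add: field_simps)
  have s2: "s^2 = 1 - c^2" using assms(7) by simp
  have id: "(\<eta> - c)^2 * L^2 - (2*E*(1 - \<rho>*c) - 2*E*(1+\<rho>*\<sigma>) - (1 - c^2)*L^2) - (\<eta>^2+2*\<sigma>*\<eta>+1)*L^2
      = 2*c*(\<rho>*E - \<eta>*L^2) + 2*\<sigma>*(\<rho>*E - \<eta>*L^2)"
    by (simp add: algebra_simps power2_eq_square)
  have "(\<eta> - c)^2 * L^2 - s^2*P^2 = D^2 * L^2"
    using id unfolding N unfolding xi s2 assms(11) eL by simp
  hence "(\<eta> - c)^2 * L^2 - (s*P)^2 = D^2 * L^2" by (simp add: power_mult_distrib)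
  thus ?thesis using k0 by (simp add: field_simps power_mult_distrib)
qed

lemma dWg: fixes D \<eta> :: real assumes "(f has_real_derivative f') (at t)" "D \<noteq> 0"
  shows "((\<lambda>t. (\<eta> - cos (f t)) / D) has_real_derivative sin (f t) * f' / D) (at t)"
  using assms by (auto intro!: derivative_eq_intros)
lemma dVg: fixes D L :: real assumes "(f has_real_derivative f') (at t)" "(g has_real_derivative g') (at t)" "D*L \<noteq> 0"
  shows "((\<lambda>t. sin (f t) * g t / (D * L)) has_real_derivative (cos (f t) * f' * g t + sin (f t) * g') / (D*L)) (at t)"
  using assms by (auto intro!: derivative_eq_intros simp: field_simps)
lemma dEg: assumes "(f has_real_derivative f') (at t)"
  shows "((\<lambda>t. exp (- f t)) has_real_derivative exp (- f t) * (- f')) (at t)"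
  using assms by (auto intro!: derivative_eq_intros)

theorem proposition4:
  fixes \<rho> \<xi> E L a b :: real and x y px py :: "real \<Rightarrow> real"
  assumes "0 < \<rho>" "\<rho> < 1"
    and "a < b"
    and "hamiltonian_trajectory \<rho> \<xi> {a<..<b} x y px py"
    and "\<forall>t\<in>{a<..<b}. 0 < x t \<and> x t < pi"
    and "\<forall>t\<in>{a<..<b}. Ham \<rho> \<xi> (x t) (y t) (px t) (py t) = E"
    and "\<forall>t\<in>{a<..<b}. py t = L"
    and "E \<noteq> 0" "L > 0"
    and "\<sigma> = (1 / \<rho>) * (\<xi> / (2 * E) - 1)"
    and "\<eta> = \<rho> * E / L ^ 2"
    and "\<eta> > 0" "-1 < \<sigma>" "\<sigma> < 1"
  shows "\<exists>c. \<forall>t\<in>{a<..<b}.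
           cosh (y t - c) = (\<eta> - cos (x t)) / sqrt (\<eta> ^ 2 + 2 * \<sigma> * \<eta> + 1) \<and>
           arccos (\<eta> - sqrt (\<eta> ^ 2 + 2 * \<sigma> * \<eta> + 1)) \<le> x t"
proof -
  define I where "I = {a<..<b}"
  define D where "D = sqrt (\<eta> ^ 2 + 2 * \<sigma> * \<eta> + 1)"
  have rad: "\<eta> ^ 2 + 2 * \<sigma> * \<eta> + 1 > (\<eta> - 1)^2"
  proof -
    have "\<eta> ^ 2 + 2 * \<sigma> * \<eta> + 1 - (\<eta> - 1)^2 = 2*\<eta>*(\<sigma>+1)" by (simp add: power2_eq_square algebra_simps)
    moreover have "2*\<eta>*(\<sigma>+1) > 0" using assms(12,13) by simp
    ultimately show ?thesis by linarith
  qed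
  have radpos: "\<eta> ^ 2 + 2 * \<sigma> * \<eta> + 1 > 0" using rad zero_le_power2[of "\<eta>-1"] by linarith
  have Dpos: "D > 0" unfolding D_def using radpos by simp
  have D2: "D^2 = \<eta> ^ 2 + 2 * \<sigma> * \<eta> + 1" unfolding D_def using radpos by simp
  have Dgt: "D > \<bar>\<eta> - 1\<bar>" unfolding D_def using rad
    by (metis real_sqrt_abs real_sqrt_less_mono)
  define W where "W = (\<lambda>t. (\<eta> - cos (x t)) / D)"
  define V where "V = (\<lambda>t. sin (x t) * px t / (D * L))"
  define F where "F = (\<lambda>t. (W t + V t) * exp (- y t))"
  have kpos: "\<And>t. 1 - \<rho> * cos (x t) > 0"
  proof -
    fix t
    have "\<rho> * cos (x t) \<le> \<rho> * 1" by (rule mult_left_mono) (use assms(1) in auto)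
    thus "1 - \<rho> * cos (x t) > 0" using assms(2) by simp
  qed
  have hyp: "\<And>t. t \<in> I \<Longrightarrow> (sin (x t)^2 * (px t^2 + L^2) + \<xi>) / (2 * (1 - \<rho> * cos (x t))) = E"
    using assms(6,7) unfolding I_def Ham_def by auto
  have WV: "\<And>t. t \<in> I \<Longrightarrow> (W t)^2 - (V t)^2 = 1"
    unfolding W_def V_def
    by (rule alg1[OF refl kpos Dpos assms(9,8,1) _ hyp assms(11,10) D2]) simp_all
  have W1: "\<And>t. t \<in> I \<Longrightarrow> W t \<ge> 1"
  proof -
    fix t assume t: "t \<in> I"
    have "W t > -1"
    proof -
      have "\<eta> - cos (x t) \<ge> \<eta> - 1" by simp
      hence "\<eta> - cos (x t) > - D" using Dgt by linarith
      thus ?thesis unfolding W_def using Dpos by (simp add: field_simps)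
    qed
    moreover have "(W t)^2 \<ge> 1" using WV[OF t] zero_le_power2[of "V t"] by linarith
    ultimately show "W t \<ge> 1" using power2_ge_1_iff[of "W t"] by linarith
  qed
  have Fpos: "\<And>t. t \<in> I \<Longrightarrow> W t + V t > 0"
  proof -
    fix t assume t: "t \<in> I"
    have "(V t)^2 < (W t)^2" using WV[OF t] by simp
    hence "\<not> \<bar>W t\<bar> \<le> \<bar>V t\<bar>" by (simp add: abs_le_square_iff)
    moreover have "W t \<ge> 1" using W1[OF t] .
    ultimately show "W t + V t > 0" by linarith
  qed
  have der: "\<And>t. t \<in> I \<Longrightarrow> (F has_real_derivative 0) (at t)"
  proof -
    fix t assume t: "t \<in> I"
    let ?k = "1 - \<rho> * cos (x t)"
    have HT: "(x has_real_derivative deriv (\<lambda>q. Ham \<rho> \<xi> (x t) (y t) q (py t)) (px t)) (at t) \<and>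
        (y has_real_derivative deriv (\<lambda>q. Ham \<rho> \<xi> (x t) (y t) (px t) q) (py t)) (at t) \<and>
        (px has_real_derivative - deriv (\<lambda>q. Ham \<rho> \<xi> q (y t) (px t) (py t)) (x t)) (at t)"
      using assms(4) t unfolding hamiltonian_trajectory_def I_def by blast
    have pyt: "py t = L" using assms(7) t unfolding I_def by auto
    have hx: "(x has_real_derivative sin (x t)^2 * px t / ?k) (at t)"
      using HT dpx[OF assms(2,1)] by auto
    have hy: "(y has_real_derivative sin (x t)^2 * L / ?k) (at t)"
      using HT dpy[OF assms(2,1)] pyt by auto
    have hp: "(px has_real_derivative - (sin (x t) * cos (x t) * (px t^2+L^2) / ?k
     - (sin (x t) ^ 2 * (px t^2+L^2) + \<xi>) * \<rho> * sin (x t) / (2 * ?k^2))) (at t)"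
      using HT dx[OF assms(2,1)] pyt by auto
    define X' where "X' = sin (x t)^2 * px t / ?k"
    define Y' where "Y' = sin (x t)^2 * L / ?k"
    define P' where "P' = - (sin (x t) * cos (x t) * (px t^2+L^2) / ?k
     - (sin (x t) ^ 2 * (px t^2+L^2) + \<xi>) * \<rho> * sin (x t) / (2 * ?k^2))"
    have hx': "(x has_real_derivative X') (at t)" using hx unfolding X'_def .
    have hy': "(y has_real_derivative Y') (at t)" using hy unfolding Y'_def .
    have hp': "(px has_real_derivative P') (at t)" using hp unfolding P'_def .
    have dW: "(W has_real_derivative sin (x t) * X' / D) (at t)"
      unfolding W_def by (rule dWg[OF hx']) (use Dpos in simp)
    have dV: "(V has_real_derivative (cos (x t) * X' * px t + sin (x t) * P') / (D*L)) (at t)"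
      unfolding V_def by (rule dVg[OF hx' hp']) (use Dpos assms(9) in simp)
    have dE: "((\<lambda>t. exp (- y t)) has_real_derivative exp (- y t) * (- Y')) (at t)"
      by (rule dEg[OF hy'])
    have dF: "(F has_real_derivative (sin (x t) * X' / D + (cos (x t) * X' * px t + sin (x t) * P') / (D*L)) * exp (- y t)
       + (exp (- y t) * (- Y')) * (W t + V t)) (at t)"
      unfolding F_def by (intro DERIV_mult DERIV_add dW dV dE)
    have z: "sin (x t) * X' / D + (cos (x t) * X' * px t + sin (x t) * P') / (D*L) - (W t + V t) * Y' = 0"
      unfolding X'_def P'_def Y'_def W_def V_def
      by (rule alg0[OF refl kpos Dpos assms(9) hyp[OF t]]) (use assms(11,9) in \<open>simp add: field_simps\<close>)
    have "(sin (x t) * X' / D + (cos (x t) * X' * px t + sin (x t) * P') / (D*L)) * exp (- y t)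
       + (exp (- y t) * (- Y')) * (W t + V t) = 
       (sin (x t) * X' / D + (cos (x t) * X' * px t + sin (x t) * P') / (D*L) - (W t + V t) * Y') * exp (- y t)"
      by (simp add: algebra_simps)
    hence "(F has_real_derivative 0) (at t)" using dF z by simp
    thus "(F has_real_derivative 0) (at t)" .
  qed
  obtain c0 where c0: "\<forall>t\<in>I. F t = c0"
    using has_field_derivative_zero_constant[of I F] der unfolding I_def
    by (meson convex_real_interval(8) has_field_derivative_at_within)
  define tm where "tm = (a+b)/2"
  have tm: "tm \<in> I" unfolding tm_def I_def using assms(3) by auto
  have c0pos: "c0 > 0" using c0 tm Fpos[OF tm] unfolding F_def by (metis exp_gt_zero mult_pos_pos)
  have main: "\<And>t. t \<in> I \<Longrightarrow> cosh (y t - (- ln c0)) = W t"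
  proof -
    fix t assume t: "t \<in> I"
    have e1: "W t + V t = exp (y t - (- ln c0))"
      using c0 t unfolding F_def using c0pos by (simp add: exp_diff exp_minus exp_add field_simps)
    have "(W t + V t) * (W t - V t) = 1" using WV[OF t] by (simp add: algebra_simps power2_eq_square)
    hence "W t - V t = 1 / (W t + V t)" using Fpos[OF t] by (simp add: eq_divide_eq mult.commute)
    hence e2: "W t - V t = exp (- (y t - (- ln c0)))" unfolding e1 by (simp add: exp_minus[symmetric] inverse_eq_divide[symmetric])
    show "cosh (y t - (- ln c0)) = W t" unfolding cosh_def using e1 e2 by simp
  qed
  show ?thesis
  proof (rule exI[of _ "- ln c0"], intro ballI conjI)
    fix t assume t0: "t \<in> {a<..<b}"
    hence t: "t \<in> I" unfolding I_def .
    show "cosh (y t - - ln c0) = (\<eta> - cos (x t)) / sqrt (\<eta>\<^sup>2 + 2 * \<sigma> * \<eta> + 1)"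
      using main[OF t] unfolding W_def D_def .
    have "\<eta> - cos (x t) \<ge> D" using W1[OF t] Dpos unfolding W_def by (simp add: field_simps)
    hence cl: "cos (x t) \<le> \<eta> - D" by simp
    have "\<eta> - D \<le> 1" using Dgt by linarith
    hence "arccos (\<eta> - D) \<le> arccos (cos (x t))"
      using cl by (intro arccos_le_arccos) auto
    also have "arccos (cos (x t)) = x t" using assms(5) t0 by (intro arccos_cos) (auto simp: less_imp_le)
    finally show "arccos (\<eta> - sqrt (\<eta>\<^sup>2 + 2 * \<sigma> * \<eta> + 1)) \<le> x t" unfolding D_def .
  qed
qed

end
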